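(* Let $p+q=p'+q'=n\ge3$. If there is an isomorphism $\mathbb{O}_{p,q}\to\mathbb{O}_{p',q'}$ preserving the structure of $\mathbb{Z}_2^n$-graded algebra, then $s(p,q)=s(p',q')$.
   Context: $\mathbb{Z}_2=\{0,1\}$. For $p+q=n\ge3$, $\mathbb{O}_{p,q}$ is the real algebra with basis $\{u_x: x\in\mathbb{Z}_2^n\}$ and product $u_x\cdot u_y=(-1)^{f(x,y)}u_{x+y}$, where $f(x,y)=\sum_{1\le i<j<k\le n}(x_ix_jy_k+x_iy_jx_k+y_ix_jx_k)+\sum_{1\le i\le j\le n}x_iy_j+\sum_{1\le i\le p}x_iy_i$. Let $\alpha_{p,q}(x)=f(x,x)$ (so $u_x^2=(-1)^{\alpha_{p,q}(x)}u_0$), and define the statistics $s(p,q)=\#\{x\in\mathbb{Z}_2^n:\alpha_{p,q}(x)=1\}$. An isomorphism preserving the graded structure is an algebra isomorphism sending each homogeneous element (scalar multiple of some $u_x$) to a homogeneous element. *)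

theory Defs
  imports Complex_Main
begin

text \<open>Elements of Z_2^n are boolean lists of length n; coordinate i (1-based in the paper)
 is list index i-1.  Elements of the algebra O_{p,q} are real-valued functions on
 bool lists supported on lists of length n (coefficients w.r.t. the basis u_x).\<close>

definition vecs :: "nat \<Rightarrow> bool list set" where
  "vecs n = {x. length x = n}"

definition bit :: "bool list \<Rightarrow> nat \<Rightarrow> nat" where
  "bit x i = (if x ! i then 1 else 0)"

definition zadd :: "bool list \<Rightarrow> bool list \<Rightarrow> bool list" where
  "zadd x y = map2 (\<lambda>a b. a \<noteq> b) x y"

text \<open>The twist function f(x,y), computed in nat; only its parity matters.\<close>
definition ftw :: "nat \<Rightarrow> nat \<Rightarrow> bool list \<Rightarrow> bool list \<Rightarrow> nat" where
  "ftw p q x y =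
     (\<Sum>k<p+q. \<Sum>j<k. \<Sum>i<j. bit x i * bit x j * bit y k + bit x i * bit y j * bit x k
                               + bit y i * bit x j * bit x k)
   + (\<Sum>j<p+q. \<Sum>i\<le>j. bit x i * bit y j)
   + (\<Sum>i<p. bit x i * bit y i)"

definition alpha :: "nat \<Rightarrow> nat \<Rightarrow> bool list \<Rightarrow> nat" where
  "alpha p q x = ftw p q x x mod 2"

definition s_stat :: "nat \<Rightarrow> nat \<Rightarrow> nat" where
  "s_stat p q = card {x \<in> vecs (p+q). alpha p q x = 1}"

definition carrierO :: "nat \<Rightarrow> (bool list \<Rightarrow> real) set" where
  "carrierO n = {a. \<forall>x. length x \<noteq> n \<longrightarrow> a x = 0}"

definition basisO :: "bool list \<Rightarrow> (bool list \<Rightarrow> real)" where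
  "basisO x = (\<lambda>z. if z = x then 1 else 0)"

text \<open>Bilinear extension of u_x u_y = (-1)^f(x,y) u_{x+y}.\<close>
definition multO :: "nat \<Rightarrow> nat \<Rightarrow> (bool list \<Rightarrow> real) \<Rightarrow> (bool list \<Rightarrow> real) \<Rightarrow> (bool list \<Rightarrow> real)" where
  "multO p q a b = (\<lambda>z. \<Sum>x\<in>vecs (p+q). \<Sum>y\<in>vecs (p+q).
      (if zadd x y = z then (-1) ^ ftw p q x y * a x * b y else 0))"

definition homogeneous :: "nat \<Rightarrow> (bool list \<Rightarrow> real) \<Rightarrow> bool" where
  "homogeneous n a = (\<exists>x\<in>vecs n. \<exists>c::real. a = (\<lambda>z. c * basisO x z))"

definition graded_iso :: "nat \<Rightarrow> nat \<Rightarrow> nat \<Rightarrow> nat \<Rightarrow> ((bool list \<Rightarrow> real) \<Rightarrow> (bool list \<Rightarrow> real)) \<Rightarrow> bool" where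
  "graded_iso p q p' q' \<phi> \<longleftrightarrow>
     bij_betw \<phi> (carrierO (p+q)) (carrierO (p'+q')) \<and>
     (\<forall>a\<in>carrierO (p+q). \<forall>b\<in>carrierO (p+q). \<phi> (\<lambda>z. a z + b z) = (\<lambda>z. \<phi> a z + \<phi> b z)) \<and>
     (\<forall>a\<in>carrierO (p+q). \<forall>c::real. \<phi> (\<lambda>z. c * a z) = (\<lambda>z. c * \<phi> a z)) \<and>
     (\<forall>a\<in>carrierO (p+q). \<forall>b\<in>carrierO (p+q). \<phi> (multO p q a b) = multO p' q' (\<phi> a) (\<phi> b)) \<and>
     (\<forall>a\<in>carrierO (p+q). homogeneous (p+q) a \<longrightarrow> homogeneous (p'+q') (\<phi> a))"

end

theory Submission
  imports Defs
begin

lemma finite_vecs[simp]: "finite (vecs n)"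
proof -
  have "vecs n = {xs. set xs \<subseteq> (UNIV::bool set) \<and> length xs = n}" by (auto simp: vecs_def)
  then show ?thesis using finite_lists_length_eq[of "UNIV::bool set" n] by simp
qed
lemma mult_basis:
  assumes "x \<in> vecs (p+q)" "y \<in> vecs (p+q)"
  shows "multO p q (\<lambda>z. a * basisO x z) (\<lambda>z. b * basisO y z)
     = (\<lambda>z. (-1)^ftw p q x y * a * b * basisO (zadd x y) z)"
proof (rule ext)
  fix z
  let ?V = "vecs (p+q)"
  let ?K = "(if zadd x y = z then (-1)^ftw p q x y * a * b else (0::real))"
  have "multO p q (\<lambda>z. a * basisO x z) (\<lambda>z. b * basisO y z) z
      = (\<Sum>x'\<in>?V. if x' = x then (\<Sum>y'\<in>?V. if y' = y then ?K else 0) else 0)"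
    unfolding multO_def
  proof (rule sum.cong[OF refl])
    fix x' assume "x' \<in> ?V"
    show "(\<Sum>y'\<in>?V. if zadd x' y' = z then (-1) ^ ftw p q x' y' * (a * basisO x x') * (b * basisO y y') else 0)
       = (if x' = x then (\<Sum>y'\<in>?V. if y' = y then ?K else 0) else 0)"
    proof (cases "x' = x")
      case True
      have "(\<Sum>y'\<in>?V. if zadd x y' = z then (-1) ^ ftw p q x y' * (a * basisO x x) * (b * basisO y y') else 0)
          = (\<Sum>y'\<in>?V. if y' = y then ?K else 0)"
        by (rule sum.cong[OF refl]) (simp add: basisO_def)
      then show ?thesis unfolding True by (simp only: if_P[OF refl])
    next
      case False
      then have "basisO x x' = 0" by (simp add: basisO_def)
      then show ?thesis using False by (simp only: mult_zero_left mult_zero_right if_cancel sum.neutral_const if_False)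
    qed
  qed
  also have "\<dots> = ?K" using assms by (simp only: sum.delta finite_vecs if_True if_P)
  also have "\<dots> = (-1)^ftw p q x y * a * b * basisO (zadd x y) z" by (simp add: basisO_def eq_commute)
  finally show "multO p q (\<lambda>z. a * basisO x z) (\<lambda>z. b * basisO y z) z = (-1)^ftw p q x y * a * b * basisO (zadd x y) z" .
qed

lemma basis_carrier: "x \<in> vecs n \<Longrightarrow> (\<lambda>z. c * basisO x z) \<in> carrierO n"
  by (auto simp: vecs_def carrierO_def basisO_def)

lemma zadd_self: "zadd x x = replicate (length x) False"
  by (induct x) (auto simp: zadd_def)

lemma bit_rep: "i < m \<Longrightarrow> bit (replicate m False) i = 0" by (simp add: bit_def)
lemma ftw_zero: "ftw p q (replicate (p+q) False) (replicate (p+q) False) = 0"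
proof -
  let ?z = "replicate (p+q) False"
  have a: "(\<Sum>k<p+q. \<Sum>j<k. \<Sum>i<j. bit ?z i * bit ?z j * bit ?z k + bit ?z i * bit ?z j * bit ?z k
                               + bit ?z i * bit ?z j * bit ?z k) = 0"
    by (intro sum.neutral ballI) (simp add: bit_rep)
  have b: "(\<Sum>j<p+q. \<Sum>i\<le>j. bit ?z i * bit ?z j) = 0"
    by (intro sum.neutral ballI) (simp add: bit_rep)
  have c: "(\<Sum>i<p. bit ?z i * bit ?z i) = 0"
    by (intro sum.neutral ballI) (simp add: bit_rep)
  show ?thesis unfolding ftw_def a b c by simp
qed

lemma alpha_sign: "((-1::real) ^ ftw p q x y) = (-1) ^ (ftw p q x y mod 2)"
  by (simp add: minus_one_power_iff)


theorem mainTheorem10: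
  fixes p q p' q' n :: nat
  assumes "p + q = n" and "p' + q' = n" and "n \<ge> 3"
    and "\<exists>\<phi>. graded_iso p q p' q' \<phi>"
  shows "s_stat p q = s_stat p' q'"
proof -
  obtain \<phi> where g: "graded_iso p q p' q' \<phi>" using assms(4) by blast
  define V where "V = vecs n"
  have V1: "vecs (p+q) = V" and V2: "vecs (p'+q') = V" using assms unfolding V_def by auto
  have C1: "carrierO (p+q) = carrierO n" and C2: "carrierO (p'+q') = carrierO n"
    using assms(1,2) by simp_all
  have G: "bij_betw \<phi> (carrierO n) (carrierO n) \<and>
     (\<forall>a\<in>carrierO n. \<forall>b\<in>carrierO n. \<phi> (\<lambda>z. a z + b z) = (\<lambda>z. \<phi> a z + \<phi> b z)) \<and>
     (\<forall>a\<in>carrierO n. \<forall>c::real. \<phi> (\<lambda>z. c * a z) = (\<lambda>z. c * \<phi> a z)) \<and>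
     (\<forall>a\<in>carrierO n. \<forall>b\<in>carrierO n. \<phi> (multO p q a b) = multO p' q' (\<phi> a) (\<phi> b)) \<and>
     (\<forall>a\<in>carrierO n. homogeneous n a \<longrightarrow> homogeneous n (\<phi> a))"
    using g unfolding graded_iso_def C1 C2 assms(1,2) .
  have bij: "bij_betw \<phi> (carrierO n) (carrierO n)" using G by (rule conjunct1)
  have inj: "inj_on \<phi> (carrierO n)" using bij by (rule bij_betw_imp_inj_on)
  have scal: "\<And>a c. a \<in> carrierO n \<Longrightarrow> \<phi> (\<lambda>z. c * a z) = (\<lambda>z. c * \<phi> a z)"
    using G by blast
  have mul: "\<And>a b. a \<in> carrierO n \<Longrightarrow> b \<in> carrierO n \<Longrightarrow> \<phi> (multO p q a b) = multO p' q' (\<phi> a) (\<phi> b)"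
    using G by blast
  have hom: "\<And>a. a \<in> carrierO n \<Longrightarrow> homogeneous n a \<Longrightarrow> homogeneous n (\<phi> a)"
    using G by blast
  let ?u = "\<lambda>x. (\<lambda>z. 1 * basisO x z)"
  have ucar: "\<And>x. x \<in> V \<Longrightarrow> ?u x \<in> carrierO n" unfolding V_def by (rule basis_carrier)
  have zero_car: "(\<lambda>z. 0::real) \<in> carrierO n" by (simp add: carrierO_def)
  have phi0: "\<phi> (\<lambda>z. 0) = (\<lambda>z. 0)"
  proof -
    have "\<phi> (\<lambda>z. 0 * (\<lambda>z. 0) z) = (\<lambda>z. 0 * \<phi> (\<lambda>z. 0) z)" using scal[OF zero_car, of 0] by simp
    then show ?thesis by simp
  qed
  have img: "\<exists>y d. y \<in> V \<and> d \<noteq> 0 \<and> \<phi> (?u x) = (\<lambda>z. d * basisO y z)" if x: "x \<in> V" for x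
  proof -
    have "homogeneous n (?u x)" unfolding homogeneous_def using x V_def by blast
    then have "homogeneous n (\<phi> (?u x))" using hom ucar x by blast
    then obtain y d where y: "y \<in> V" and d: "\<phi> (?u x) = (\<lambda>z. d * basisO y z)"
      by (auto simp: homogeneous_def V_def)
    have "d \<noteq> 0"
    proof
      assume "d = 0"
      then have "\<phi> (?u x) = \<phi> (\<lambda>z. 0)" using d phi0 by simp
      then have "?u x = (\<lambda>z. 0)" using inj ucar[OF x] zero_car by (meson inj_on_def)
      from fun_cong[OF this, of x] have "?u x x = 0" by simp
      then show False by (simp add: basisO_def)
    qed
    then show ?thesis using y d by blast
  qed
  define z0 where "z0 = replicate n False"
  have z0V: "z0 \<in> V" by (simp add: z0_def V_def vecs_def)
  have zz: "\<And>x. x \<in> V \<Longrightarrow> zadd x x = z0" by (simp add: zadd_self V_def vecs_def z0_def)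
  have phie: "\<phi> (?u z0) = ?u z0"
  proof -
    obtain y c where y: "y \<in> V" and c: "c \<noteq> 0" and e: "\<phi> (?u z0) = (\<lambda>z. c * basisO y z)"
      using img[OF z0V] by blast
    have "multO p q (?u z0) (?u z0) = (\<lambda>z. (-1)^ftw p q z0 z0 * 1 * 1 * basisO (zadd z0 z0) z)"
      using mult_basis[of z0 p q z0 1 1] z0V V1 by simp
    also have "\<dots> = ?u z0" using ftw_zero[of p q] assms(1) zz[OF z0V] z0_def by simp
    finally have sq: "multO p q (?u z0) (?u z0) = ?u z0" .
    have "\<phi> (?u z0) = multO p' q' (\<phi> (?u z0)) (\<phi> (?u z0))" using mul[OF ucar[OF z0V] ucar[OF z0V]] sq by simp
    also have "\<dots> = (\<lambda>z. (-1)^ftw p' q' y y * c * c * basisO (zadd y y) z)"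
      unfolding e using mult_basis[of y p' q' y c c] y V2 by simp
    finally have E: "(\<lambda>z. c * basisO y z) = (\<lambda>z. (-1)^ftw p' q' y y * c * c * basisO z0 z)"
      using e zz[OF y] by simp
    have "c = (-1)^ftw p' q' y y * c * c * basisO z0 y" using fun_cong[OF E, of y] by (simp add: basisO_def)
    then have "y = z0" using c by (auto simp: basisO_def split: if_splits)
    then have "c = c * c" using E fun_cong[OF E, of z0] ftw_zero[of p' q'] assms(2) z0_def
      by (simp add: basisO_def)
    then have "c = 1" using c by (metis mult_cancel_left1)
    then show ?thesis using e \<open>y = z0\<close> by simp
  qed
  define \<sigma> where "\<sigma> x = (SOME y. y \<in> V \<and> (\<exists>d. d \<noteq> 0 \<and> \<phi> (?u x) = (\<lambda>z. d * basisO y z)))" for x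
  have sig: "\<sigma> x \<in> V \<and> (\<exists>d. d \<noteq> 0 \<and> \<phi> (?u x) = (\<lambda>z. d * basisO (\<sigma> x) z))" if xV: "x \<in> V" for x
    proof -
    obtain y d where "y \<in> V \<and> d \<noteq> 0 \<and> \<phi> (?u x) = (\<lambda>z. d * basisO y z)" using img[OF xV] by blast
    then have "\<exists>y. y \<in> V \<and> (\<exists>d. d \<noteq> 0 \<and> \<phi> (?u x) = (\<lambda>z. d * basisO y z))" by blast
    from someI_ex[OF this] show ?thesis unfolding \<sigma>_def .
  qed
  have alpha_pres: "alpha p' q' (\<sigma> x) = alpha p q x" if x: "x \<in> V" for x
  proof -
    obtain d where d: "d \<noteq> 0" and e: "\<phi> (?u x) = (\<lambda>z. d * basisO (\<sigma> x) z)" and y: "\<sigma> x \<in> V"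
      using sig[OF x] by blast
    have "multO p q (?u x) (?u x) = (\<lambda>z. (-1)^ftw p q x x * 1 * 1 * basisO (zadd x x) z)"
      using mult_basis[of x p q x 1 1] x V1 by simp
    also have "\<dots> = (\<lambda>z. (-1)^ftw p q x x * ?u z0 z)" using zz[OF x] by simp
    finally have sq: "multO p q (?u x) (?u x) = (\<lambda>z. (-1)^ftw p q x x * ?u z0 z)" .
    have "\<phi> (multO p q (?u x) (?u x)) = (\<lambda>z. (-1)^ftw p q x x * ?u z0 z)"
      unfolding sq using scal[OF ucar[OF z0V]] phie by simp
    moreover have "\<phi> (multO p q (?u x) (?u x)) = multO p' q' (\<phi> (?u x)) (\<phi> (?u x))"
      using mul[OF ucar[OF x] ucar[OF x]] by simp
    moreover have "\<dots> = (\<lambda>z. (-1)^ftw p' q' (\<sigma> x) (\<sigma> x) * d * d * basisO (zadd (\<sigma> x) (\<sigma> x)) z)"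
      unfolding e using mult_basis[of "\<sigma> x" p' q' "\<sigma> x" d d] y V2 by simp
    ultimately have E: "(\<lambda>z. (-1)^ftw p q x x * ?u z0 z) = (\<lambda>z. (-1)^ftw p' q' (\<sigma> x) (\<sigma> x) * d * d * basisO z0 z)"
      using zz[OF y] by simp
    have E2: "((-1::real)^(ftw p q x x mod 2)) = (-1)^(ftw p' q' (\<sigma> x) (\<sigma> x) mod 2) * (d * d)"
      using fun_cong[OF E, of z0] by (simp add: basisO_def alpha_sign[symmetric] mult.assoc)
    have dd: "d * d > 0" using d by (simp add: zero_less_mult_iff linorder_neq_iff) (metis not_less_iff_gr_or_eq)
    have m1: "ftw p q x x mod 2 = 0 \<or> ftw p q x x mod 2 = 1" by auto
    have m2: "ftw p' q' (\<sigma> x) (\<sigma> x) mod 2 = 0 \<or> ftw p' q' (\<sigma> x) (\<sigma> x) mod 2 = 1" by auto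
    from m1 m2 E2 dd show ?thesis unfolding alpha_def
      by (elim disjE) auto
  qed
  have sinj: "inj_on \<sigma> V"
  proof (rule inj_onI)
    fix x1 x2 assume x1: "x1 \<in> V" and x2: "x2 \<in> V" and eq: "\<sigma> x1 = \<sigma> x2"
    obtain d1 where d1: "d1 \<noteq> 0" and e1: "\<phi> (?u x1) = (\<lambda>z. d1 * basisO (\<sigma> x1) z)" using sig[OF x1] by blast
    obtain d2 where d2: "d2 \<noteq> 0" and e2: "\<phi> (?u x2) = (\<lambda>z. d2 * basisO (\<sigma> x1) z)" using sig[OF x2] eq by auto
    have a1: "(\<lambda>z. d2 * ?u x1 z) \<in> carrierO n" using basis_carrier x1 V_def by simp
    have a2: "(\<lambda>z. d1 * ?u x2 z) \<in> carrierO n" using basis_carrier x2 V_def by simp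
    have "\<phi> (\<lambda>z. d2 * ?u x1 z) = \<phi> (\<lambda>z. d1 * ?u x2 z)"
      using scal[OF ucar[OF x1], of d2] scal[OF ucar[OF x2], of d1] e1 e2 by (simp add: mult.left_commute)
    then have "(\<lambda>z. d2 * ?u x1 z) = (\<lambda>z. d1 * ?u x2 z)" using inj a1 a2 by (meson inj_on_def)
    from fun_cong[OF this, of x1] show "x1 = x2" using d2 by (auto simp: basisO_def split: if_splits)
  qed
  have sV: "\<sigma> ` V = V"
  proof -
    have "\<sigma> ` V \<subseteq> V" using sig by blast
    moreover have "card (\<sigma> ` V) = card V" using sinj card_image by blast
    ultimately show ?thesis using finite_vecs[of n] card_subset_eq[of V "\<sigma> ` V"] unfolding V_def by blast
  qed
  have "\<sigma> ` {x \<in> V. alpha p q x = 1} = {y \<in> V. alpha p' q' y = 1}"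
  proof
    show "\<sigma> ` {x \<in> V. alpha p q x = 1} \<subseteq> {y \<in> V. alpha p' q' y = 1}" using sig alpha_pres by auto
    show "{y \<in> V. alpha p' q' y = 1} \<subseteq> \<sigma> ` {x \<in> V. alpha p q x = 1}"
    proof
      fix y assume "y \<in> {y \<in> V. alpha p' q' y = 1}"
      then have yV: "y \<in> V" and ya: "alpha p' q' y = 1" by auto
      then have "y \<in> \<sigma> ` V" using sV by simp
      then obtain x where "x \<in> V" "y = \<sigma> x" by blast
      with ya have "x \<in> V" "y = \<sigma> x" "alpha p' q' y = 1" by auto
      then show "y \<in> \<sigma> ` {x \<in> V. alpha p q x = 1}" using alpha_pres by auto
    qed
  qed
  moreover have "inj_on \<sigma> {x \<in> V. alpha p q x = 1}" using sinj by (rule inj_on_subset) auto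
  ultimately have "card {y \<in> V. alpha p' q' y = 1} = card {x \<in> V. alpha p q x = 1}"
    using card_image[of \<sigma> "{x \<in> V. alpha p q x = 1}"] by simp
  then show ?thesis unfolding s_stat_def V1 V2 by (rule sym)
qed

end
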